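(* Let $D\ge1$, $2\le p\le 2+4/D$ and $N>0$. Then there exists $\lambda>0$ such that for every $J\in\mathbf{N}^D$ the Hamiltonian $H_{\Delta(J)}$ is uniformly convex on $\Omega_N$, i.e. there is $c>0$ with $\frac{d^2}{dt^2}\big|_{t=0}H_{\Delta(J)}(u+tv)\ge c\int_{\mathbf{T}^D}|P_Jv(\theta)|^2\frac{d^D\theta}{(2\pi)^D}$ for all $u\in\Omega_N$ and $v\in L^2(\mathbf{T}^D;\mathbf{C})$.
   Context: $\mathbf{T}^D=(\mathbf{R}/2\pi\mathbf{Z})^D$ with normalized measure $d^D\theta/(2\pi)^D$. $\Omega_N=\{u\in L^2(\mathbf{T}^D;\mathbf{C}):\int|u|^2\frac{d^D\theta}{(2\pi)^D}\le N\}$. For $j\in\mathbf{N}$ let $\Delta_j=\{2^{j-1},2^{j-1}+1,\dots,2^j-1\}$, for $J=(j_1,\dots,j_D)\in\mathbf{N}^D$ let $\Delta(J)=\Delta_{j_1}\times\cdots\times\Delta_{j_D}$, and let $P_J$ be the orthogonal (Dirichlet) projection of $L^2(\mathbf{T}^D)$ onto $\mathrm{span}\{e^{ik\cdot\theta}:k\in\Delta(J)\}$. For $\lambda>0$, $H_{\Delta(J)}(u)=\frac12\int_{\mathbf{T}^D}\|\nabla P_Ju\|^2\frac{d^D\theta}{(2\pi)^D}-\frac{\lambda}{p}\int_{\mathbf{T}^D}|P_Ju|^p\frac{d^D\theta}{(2\pi)^D}$. The paper says only "uniformly convex on $\Omega_N$"; since $H_{\Delta(J)}$ depends on $u$ only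 through $P_Ju$, uniform convexity is understood as the lower bound on the second derivative stated in the claim. *)

theory Defs
  imports "HOL-Analysis.Analysis"
begin

text \<open>The torus T^D is modelled by the fundamental cube [0,2pi]^D in real^'n,
  D = CARD('n); functions on the torus are functions on real^'n, only their
  values on the cube matter for integrals.\<close>

definition torus_box :: "(real^'n) set" where
  "torus_box = cbox 0 (\<chi> i. 2 * pi)"

definition tmeas :: "(real^'n) measure" where
  "tmeas = lebesgue_on torus_box"

definition tavg :: "(real^'n \<Rightarrow> real) \<Rightarrow> real" where
  "tavg f = (LINT x|(tmeas::(real^'n) measure). f x) / (2 * pi) ^ CARD('n)"

definition tavgc :: "(real^'n \<Rightarrow> complex) \<Rightarrow> complex" where
  "tavgc f = (LINT x|(tmeas::(real^'n) measure). f x) / of_real ((2 * pi) ^ CARD('n))"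

definition L2T :: "(real^'n \<Rightarrow> complex) \<Rightarrow> bool" where
  "L2T u \<longleftrightarrow> u \<in> borel_measurable (tmeas::(real^'n) measure)
     \<and> integrable (tmeas::(real^'n) measure) (\<lambda>x. (cmod (u x))^2)"

definition Omega :: "real \<Rightarrow> (real^'n \<Rightarrow> complex) set" where
  "Omega N = {u. L2T u \<and> tavg (\<lambda>x. (cmod (u x))^2) \<le> N}"

definition Delta1 :: "nat \<Rightarrow> int set" where
  "Delta1 j = {2 ^ (j - 1) .. 2 ^ j - 1}"

definition DeltaJ :: "nat^'n \<Rightarrow> (int^'n) set" where
  "DeltaJ J = {k. \<forall>i. k $ i \<in> Delta1 (J $ i)}"

definition echar :: "int^'n \<Rightarrow> real^'n \<Rightarrow> complex" where
  "echar k \<theta> = exp (\<i> * of_real (\<Sum>i\<in>UNIV. of_int (k $ i) * \<theta> $ i))"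

definition fcoeff :: "(real^'n \<Rightarrow> complex) \<Rightarrow> int^'n \<Rightarrow> complex" where
  "fcoeff u k = tavgc (\<lambda>\<theta>. u \<theta> * cnj (echar k \<theta>))"

definition PJ :: "nat^'n \<Rightarrow> (real^'n \<Rightarrow> complex) \<Rightarrow> real^'n \<Rightarrow> complex" where
  "PJ J u \<theta> = (\<Sum>k\<in>DeltaJ J. fcoeff u k * echar k \<theta>)"

definition partialD :: "(real^'n \<Rightarrow> complex) \<Rightarrow> 'n \<Rightarrow> real^'n \<Rightarrow> complex" where
  "partialD f j \<theta> = vector_derivative (\<lambda>t. f (\<theta> + t *\<^sub>R axis j 1)) (at 0)"

definition gradnorm2 :: "(real^'n \<Rightarrow> complex) \<Rightarrow> real^'n \<Rightarrow> real" where
  "gradnorm2 f \<theta> = (\<Sum>j\<in>UNIV. (cmod (partialD f j \<theta>))^2)"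

definition Ham :: "real \<Rightarrow> real \<Rightarrow> nat^'n \<Rightarrow> (real^'n \<Rightarrow> complex) \<Rightarrow> real" where
  "Ham lam p J u = (1/2) * tavg (\<lambda>\<theta>. gradnorm2 (PJ J u) \<theta>)
      - lam / p * tavg (\<lambda>\<theta>. (cmod (PJ J u \<theta>)) powr p)"

end

theory Submission
  imports Defs
begin


lemma integral_lborel_prod:
  fixes f :: "'a::euclidean_space \<Rightarrow> real \<Rightarrow> complex"
  assumes int: "\<And>b. b \<in> Basis \<Longrightarrow> integrable lborel (f b)"
  shows "(LINT x|(lborel::'a measure). (\<Prod>b\<in>Basis. f b (x \<bullet> b))) = (\<Prod>b\<in>Basis. LINT x|lborel. f b x)"
proof -
  interpret product_sigma_finite "\<lambda>_::'a. lborel::real measure" by standard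
  have meas: "\<And>b. b \<in> Basis \<Longrightarrow> f b \<in> borel_measurable borel"
    using int by (simp add: borel_measurable_integrable)
  have "(LINT x|(lborel::'a measure). (\<Prod>b\<in>Basis. f b (x \<bullet> b)))
     = (LINT x|(\<Pi>\<^sub>M b\<in>(Basis::'a set). lborel). (\<Prod>b\<in>Basis. f b ((\<Sum>b'\<in>Basis. x b' *\<^sub>R b') \<bullet> b)))"
    apply (subst lborel_eq)
    apply (subst integral_distr)
      apply measurable
    using meas apply measurable
    done
  also have "\<dots> = (LINT x|(\<Pi>\<^sub>M b\<in>(Basis::'a set). lborel). (\<Prod>b\<in>Basis. f b (x b)))"
    apply (rule Bochner_Integration.integral_cong[OF refl])
    apply (rule prod.cong[OF refl])
    apply (simp add: inner_sum_left inner_Basis if_distrib cong: if_cong)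
    done
  also have "\<dots> = (\<Prod>b\<in>Basis. LINT x|lborel. f b x)"
    by (rule product_integral_prod) (auto intro: int)
  finally show ?thesis .
qed



lemma lborel_indicator_integral:
  fixes g :: "'a::euclidean_space \<Rightarrow> 'b::euclidean_space"
  assumes "continuous_on (cbox a b) g"
  shows "(LINT x|lborel. indicator (cbox a b) x *\<^sub>R g x) = integral (cbox a b) g"
proof -
  have m: "(\<lambda>x. indicator (cbox a b) x *\<^sub>R g x) \<in> borel_measurable lborel"
    using borel_measurable_continuous_on_indicator[OF _ assms] by simp
  have "(LINT x|lborel. indicator (cbox a b) x *\<^sub>R g x) = (LINT x|lebesgue. indicator (cbox a b) x *\<^sub>R g x)"
    using integral_completion[OF m] by simp
  also have "\<dots> = (LINT x:cbox a b|lebesgue. g x)"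
    by (simp add: set_lebesgue_integral_def)
  also have "\<dots> = integral (cbox a b) g"
    by (rule set_lebesgue_integral_eq_integral(2)[OF absolutely_integrable_continuous[OF assms]])
  finally show ?thesis .
qed

lemma tmeas_integral:
  fixes f :: "real^'n \<Rightarrow> 'b::euclidean_space"
  assumes "continuous_on torus_box f"
  shows "integrable (tmeas::(real^'n) measure) f" "(LINT x|(tmeas::(real^'n) measure). f x) = integral torus_box f"
proof -
  have ai: "f absolutely_integrable_on torus_box"
    using assms absolutely_integrable_continuous unfolding torus_box_def by blast
  show "integrable (tmeas::(real^'n) measure) f"
    unfolding tmeas_def using absolutely_integrable_imp_integrable[OF ai] by (simp add: torus_box_def)
  have "(LINT x|(tmeas::(real^'n) measure). f x) = (LINT x:torus_box|lebesgue. f x)"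
    unfolding tmeas_def set_lebesgue_integral_def
    by (subst integral_restrict_space) (auto simp: torus_box_def)
  also have "\<dots> = integral torus_box f"
    by (rule set_lebesgue_integral_eq_integral(2)[OF ai])
  finally show "(LINT x|(tmeas::(real^'n) measure). f x) = integral torus_box f" .
qed

lemma int1d:
  fixes c :: real
  assumes "c \<in> \<int>"
  shows "integral {0..2*pi} (\<lambda>x. exp (\<i> * of_real (c * x))) = (if c = 0 then 2*pi else 0)"
proof (cases "c = 0")
  case True then show ?thesis by (simp add: scaleR_conv_of_real)
next
  case False
  have d: "\<And>x. ((\<lambda>x. exp (\<i> * of_real (c * x)) / (\<i> * of_real c)) has_vector_derivative exp (\<i> * of_real (c * x))) (at x within {0..2*pi})"
  proof -
    fix x :: real
    have "((\<lambda>z. exp (\<i> * (of_real c * z)) / (\<i> * of_real c)) has_field_derivative exp (\<i> * (of_real c * of_real x))) (at (of_real x))"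
      apply (rule derivative_eq_intros refl | simp)+
      using False by (auto simp: divide_simps mult_ac)
    from has_vector_derivative_real_field[OF this]
    show "((\<lambda>x. exp (\<i> * of_real (c * x)) / (\<i> * of_real c)) has_vector_derivative exp (\<i> * of_real (c * x))) (at x within {0..2*pi})"
      by simp
  qed
  have "((\<lambda>x. exp (\<i> * of_real (c * x))) has_integral
       (exp (\<i> * of_real (c * (2*pi))) / (\<i> * of_real c) - exp (\<i> * of_real (c * 0)) / (\<i> * of_real c))) {0..2*pi}"
    apply (rule fundamental_theorem_of_calculus)
     apply simp
    apply (rule d)
    done
  moreover have "exp (\<i> * of_real (c * (2*pi))) = 1"
  proof -
    have "exp (\<i> * of_real (c * (2*pi))) = cis (2*pi*c)" by (simp add: cis_conv_exp mult_ac)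
    then show ?thesis using cis_multiple_2pi[OF assms] by simp
  qed
  ultimately show ?thesis using False by (simp add: integral_unique)
qed


lemma continuous_echar[continuous_intros]: "continuous_on S (echar m)"
  unfolding echar_def by (intro continuous_intros)

lemma int_echar:
  fixes m :: "int^'n"
  shows "integral torus_box (echar m) = (if m = 0 then of_real ((2*pi)^CARD('n)) else 0)"
proof -
  define M :: "real^'n" where "M = (\<chi> i. of_int (m $ i))"
  have MB: "\<And>b. b \<in> Basis \<Longrightarrow> M \<bullet> b \<in> \<int>"
    by (auto simp: Basis_vec_def M_def inner_axis inner_axis')
  have ind: "\<And>x. (indicator torus_box x::real) = (\<Prod>b\<in>(Basis::(real^'n) set). indicator {0..2*pi} (x \<bullet> b))"
  proof -
    fix x :: "real^'n"
    show "(indicator torus_box x::real) = (\<Prod>b\<in>(Basis::(real^'n) set). indicator {0..2*pi} (x \<bullet> b))"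
    proof (cases "x \<in> torus_box")
      case True
      then have "\<And>b. b \<in> (Basis::(real^'n) set) \<Longrightarrow> x \<bullet> b \<in> {0..2*pi}"
        unfolding torus_box_def mem_box by (auto simp: Basis_vec_def inner_axis)
      then show ?thesis using True by (simp add: indicator_def)
    next
      case False
      then obtain i where "\<not> (0 \<le> x $ i \<and> x $ i \<le> 2*pi)"
        unfolding torus_box_def mem_box by (auto simp: Basis_vec_def inner_axis)
      then have "axis i 1 \<in> (Basis::(real^'n) set)" "x \<bullet> axis i 1 \<notin> {0..2*pi}"
        by (auto simp: Basis_vec_def inner_axis)
      then have "\<exists>b\<in>(Basis::(real^'n) set). x \<bullet> b \<notin> {0..2*pi}" by blast
      then show ?thesis using False
        by (simp add: indicator_def prod_zero_iff del: atLeastAtMost_iff)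
    qed
  qed
  have ech: "\<And>x. echar m x = (\<Prod>b\<in>(Basis::(real^'n) set). exp (\<i> * of_real ((M \<bullet> b) * (x \<bullet> b))))"
  proof -
    fix x :: "real^'n"
    have "(\<Sum>i\<in>UNIV. of_int (m $ i) * x $ i) = M \<bullet> x"
      by (simp add: M_def inner_vec_def)
    also have "\<dots> = (\<Sum>b\<in>Basis. (M \<bullet> b) * (x \<bullet> b))"
      by (rule euclidean_inner)
    finally show "echar m x = (\<Prod>b\<in>(Basis::(real^'n) set). exp (\<i> * of_real ((M \<bullet> b) * (x \<bullet> b))))"
      unfolding echar_def by (simp add: sum_distrib_left exp_sum)
  qed
  have "integral torus_box (echar m) = (LINT x|lborel. indicator torus_box x *\<^sub>R echar m x)"
    unfolding torus_box_def by (rule lborel_indicator_integral[symmetric]) (intro continuous_intros)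
  also have "\<dots> = (LINT x|lborel. (\<Prod>b\<in>(Basis::(real^'n) set). indicator {0..2*pi} (x \<bullet> b) *\<^sub>R exp (\<i> * of_real ((M \<bullet> b) * (x \<bullet> b)))))"
    by (simp add: ind ech prod.distrib scaleR_conv_of_real)
  also have "\<dots> = (\<Prod>b\<in>(Basis::(real^'n) set). LINT y|lborel. indicator {0..2*pi} y *\<^sub>R exp (\<i> * of_real ((M \<bullet> b) * y)))"
  proof (rule integral_lborel_prod)
    fix b :: "real^'n"
    show "integrable lborel (\<lambda>y. indicator {0..2*pi} y *\<^sub>R exp (\<i> * of_real ((M \<bullet> b) * y)))"
    proof -
      have c: "continuous_on {0..2*pi} (\<lambda>y. exp (\<i> * of_real ((M \<bullet> b) * y)))"
        by (intro continuous_intros)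
      have m: "(\<lambda>y. indicator {0..2*pi} y *\<^sub>R exp (\<i> * of_real ((M \<bullet> b) * y))) \<in> borel_measurable lborel"
        using borel_measurable_continuous_on_indicator[of "{0..2*pi}", OF _ c] by simp
      show ?thesis
        using absolutely_integrable_continuous_real[OF c] integrable_completion[OF m]
        by (simp add: set_integrable_def)
    qed
  qed
  also have "\<dots> = (\<Prod>b\<in>(Basis::(real^'n) set). (if M \<bullet> b = 0 then of_real (2*pi) else 0))"
  proof (rule prod.cong[OF refl])
    fix b :: "real^'n" assume b: "b \<in> Basis"
    have "(LINT y|lborel. indicator {0..2*pi} y *\<^sub>R exp (\<i> * of_real ((M \<bullet> b) * y)))
        = integral {0..2*pi} (\<lambda>y. exp (\<i> * of_real ((M \<bullet> b) * y)))"
    proof -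
      have c: "continuous_on (cbox 0 (2*pi)) (\<lambda>y. exp (\<i> * of_real ((M \<bullet> b) * y)))"
        by (intro continuous_intros)
      show ?thesis using lborel_indicator_integral[OF c] by (simp add: cbox_interval)
    qed
    also have "\<dots> = (if M \<bullet> b = 0 then of_real (2*pi) else 0)"
      using int1d[OF MB[OF b]] by simp
    finally show "(LINT y|lborel. indicator {0..2*pi} y *\<^sub>R exp (\<i> * of_real ((M \<bullet> b) * y))) = (if M \<bullet> b = 0 then of_real (2*pi) else 0)" .
  qed
  also have "\<dots> = (if m = 0 then of_real ((2*pi)^CARD('n)) else 0)"
  proof (cases "m = 0")
    case True
    then have "\<And>b. b \<in> (Basis::(real^'n) set) \<Longrightarrow> M \<bullet> b = 0" by (simp add: M_def vec_eq_iff zero_vec_def[symmetric])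
    then show ?thesis using True by (simp add: prod_constant)
  next
    case False
    then obtain i where "m $ i \<noteq> 0" by (metis vec_eq_iff zero_index)
    then have "axis i 1 \<in> (Basis::(real^'n) set)" "M \<bullet> axis i 1 \<noteq> 0"
      by (auto simp: Basis_vec_def M_def inner_axis inner_axis')
    then have "\<exists>b\<in>(Basis::(real^'n) set). (if M \<bullet> b = 0 then complex_of_real (2 * pi) else 0) = 0" by force
    then show ?thesis using False by (simp add: prod_zero_iff del: if_image_distrib)
  qed
  finally show ?thesis .
qed



definition P1 :: "real \<Rightarrow> complex \<Rightarrow> complex \<Rightarrow> real" where
  "P1 s z w = s * (cmod z ^ 2) powr (s - 1) * (2 * Re (cnj z * w))"

definition P2 :: "real \<Rightarrow> complex \<Rightarrow> complex \<Rightarrow> real" where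
  "P2 s z w = s * (s - 1) * (cmod z ^ 2) powr (s - 2) * (2 * Re (cnj z * w))^2
     + s * (cmod z ^ 2) powr (s - 1) * (2 * cmod w ^ 2)"

lemma q_expand: "cmod (a + of_real t * b) ^ 2 = cmod a ^ 2 + 2 * t * Re (cnj a * b) + t^2 * cmod b ^ 2"
  unfolding cmod_power2 by (simp add: power2_eq_square algebra_simps)

lemma re_lin: "2 * Re (cnj (a + of_real t * b) * b) = 2 * Re (cnj a * b) + 2 * t * cmod b ^ 2"
  unfolding cmod_power2 by (simp add: power2_eq_square algebra_simps)

lemma q_deriv: "((\<lambda>t. cmod (a + of_real t * b) ^ 2) has_real_derivative 2 * Re (cnj (a + of_real t * b) * b)) (at t)"
  unfolding q_expand re_lin
  by (rule derivative_eq_intros refl | simp)+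

lemma re_lin_deriv: "((\<lambda>t. 2 * Re (cnj (a + of_real t * b) * b)) has_real_derivative 2 * cmod b ^ 2) (at t)"
  unfolding re_lin
  by (rule derivative_eq_intros refl | simp)+

lemma powr_split: "0 \<le> (x::real) \<Longrightarrow> x powr s = x powr (s - 1) * x"
  by (cases "x = 0") (simp_all add: powr_diff)

lemma zero_case:
  assumes z: "a + of_real t * b = 0"
  shows "\<And>h. a + of_real (t + h) * b = of_real h * b"
  using z by (simp add: algebra_simps)

lemma D1:
  assumes s: "s > 1"
  shows "((\<lambda>t. (cmod (a + of_real t * b) ^ 2) powr s) has_real_derivative P1 s (a + of_real t * b) b) (at t)"
proof (cases "a + of_real t * b = 0")
  case False
  then have pos: "cmod (a + of_real t * b) ^ 2 > 0" by simp
  show ?thesis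
    using DERIV_fun_powr[OF q_deriv pos, of s] by (simp add: P1_def mult_ac)
next
  case True
  note zc = zero_case[OF True]
  have "(\<lambda>h. ((cmod (a + of_real (t + h) * b) ^ 2) powr s - (cmod (a + of_real t * b) ^ 2) powr s) / h) \<midarrow>0\<rightarrow> 0"
  proof -
    have e: "\<forall>\<^sub>F h in at 0. ((cmod (a + of_real (t + h) * b) ^ 2) powr s - (cmod (a + of_real t * b) ^ 2) powr s) / h
        = (h^2 * cmod b ^ 2) powr (s - 1) * h * cmod b ^ 2"
    proof (rule eventually_mono[OF eventually_neq_at_within[of 0 0]])
      fix h :: real assume "h \<noteq> 0"
      then show "((cmod (a + of_real (t + h) * b) ^ 2) powr s - (cmod (a + of_real t * b) ^ 2) powr s) / h
        = (h^2 * cmod b ^ 2) powr (s - 1) * h * cmod b ^ 2"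
      proof -
        have eq: "cmod (a + of_real (t + h) * b) ^ 2 = h^2 * cmod b ^ 2"
          unfolding zc by (simp add: norm_mult power_mult_distrib)
        have ps: "(h^2 * cmod b ^ 2) powr s = (h^2 * cmod b ^ 2) powr (s - 1) * (h^2 * cmod b ^ 2)"
          by (rule powr_split) simp
        have "((cmod (a + of_real (t + h) * b) ^ 2) powr s - (cmod (a + of_real t * b) ^ 2) powr s) / h
            = (h^2 * cmod b ^ 2) powr s / h"
          unfolding eq using True by simp
        also have "\<dots> = (h^2 * cmod b ^ 2) powr (s - 1) * h * cmod b ^ 2"
          unfolding ps using \<open>h \<noteq> 0\<close> by (simp add: power2_eq_square)
        finally show ?thesis .
      qed
    qed
    have "((\<lambda>h. (h^2 * cmod b ^ 2) powr (s - 1) * h * cmod b ^ 2) \<longlongrightarrow> (0^2 * cmod b ^ 2) powr (s - 1) * 0 * cmod b ^ 2) (at 0)"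
      using s by (intro tendsto_intros) auto
    then have "((\<lambda>h. (h^2 * cmod b ^ 2) powr (s - 1) * h * cmod b ^ 2) \<longlongrightarrow> 0) (at 0)" by simp
    then show ?thesis using tendsto_cong[OF e] by simp
  qed
  then show ?thesis using True by (simp add: DERIV_def P1_def)
qed

lemma D2:
  assumes s: "s > 1"
  shows "((\<lambda>t. P1 s (a + of_real t * b) b) has_real_derivative P2 s (a + of_real t * b) b) (at t)"
proof (cases "a + of_real t * b = 0")
  case False
  then have pos: "cmod (a + of_real t * b) ^ 2 > 0" by simp
  have d1: "DERIV (\<lambda>t. (cmod (a + of_real t * b) ^ 2) powr (s - 1)) t :>
     (s - 1) * (cmod (a + of_real t * b) ^ 2) powr (s - 1 - of_nat 1) * (2 * Re (cnj (a + of_real t * b) * b))"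
    by (rule DERIV_fun_powr[OF q_deriv pos])
  have "DERIV (\<lambda>t. s * (cmod (a + of_real t * b) ^ 2) powr (s - 1) * (2 * Re (cnj (a + of_real t * b) * b))) t :>
     s * ((s - 1) * (cmod (a + of_real t * b) ^ 2) powr (s - 1 - of_nat 1) * (2 * Re (cnj (a + of_real t * b) * b)))
       * (2 * Re (cnj (a + of_real t * b) * b)) + 2 * cmod b ^ 2 * (s * (cmod (a + of_real t * b) ^ 2) powr (s - 1))"
    by (rule DERIV_mult[OF DERIV_cmult[OF d1] re_lin_deriv])
  then show ?thesis
    by (simp add: P1_def P2_def power2_eq_square algebra_simps)
next
  case True
  note zc = zero_case[OF True]
  have "(\<lambda>h. (P1 s (a + of_real (t + h) * b) b - P1 s (a + of_real t * b) b) / h) \<midarrow>0\<rightarrow> 0"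
  proof -
    have e: "\<forall>\<^sub>F h in at 0. (P1 s (a + of_real (t + h) * b) b - P1 s (a + of_real t * b) b) / h
        = s * (h^2 * cmod b ^ 2) powr (s - 1) * (2 * cmod b ^ 2)"
    proof (rule eventually_mono[OF eventually_neq_at_within[of 0 0]])
      fix h :: real assume "h \<noteq> 0"
      then show "(P1 s (a + of_real (t + h) * b) b - P1 s (a + of_real t * b) b) / h
        = s * (h^2 * cmod b ^ 2) powr (s - 1) * (2 * cmod b ^ 2)"
      proof -
        have "cmod (a + of_real (t + h) * b) ^ 2 = h^2 * cmod b ^ 2"
          unfolding zc by (simp add: norm_mult power_mult_distrib)
        moreover have "Re (cnj (a + of_real (t + h) * b) * b) = h * cmod b ^ 2"
          unfolding zc cmod_power2 by (simp add: power2_eq_square algebra_simps)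
        ultimately show ?thesis using True s \<open>h \<noteq> 0\<close>
          by (simp add: P1_def)
      qed
    qed
    have "((\<lambda>h. s * (h^2 * cmod b ^ 2) powr (s - 1) * (2 * cmod b ^ 2)) \<longlongrightarrow> s * (0^2 * cmod b ^ 2) powr (s - 1) * (2 * cmod b ^ 2)) (at 0)"
      using s by (intro tendsto_intros) auto
    then have "((\<lambda>h. s * (h^2 * cmod b ^ 2) powr (s - 1) * (2 * cmod b ^ 2)) \<longlongrightarrow> 0) (at 0)" by simp
    then show ?thesis using tendsto_cong[OF e] by simp
  qed
  then show ?thesis using True by (simp add: DERIV_def P1_def P2_def)
qed


lemma cont_P1:
  assumes "s > 1" "continuous_on S f" "continuous_on S g"
  shows "continuous_on S (\<lambda>x. P1 s (f x) (g x))"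
  unfolding P1_def using assms
  by (intro continuous_intros continuous_on_powr') auto

lemma T_bound:
  assumes "s > 1"
  shows "\<bar>(cmod z ^ 2) powr (s - 2) * (2 * Re (cnj z * w))^2\<bar> \<le> 4 * cmod w ^ 2 * (cmod z ^ 2) powr (s - 1)"
proof -
  have r: "(Re (cnj z * w))^2 \<le> cmod z ^ 2 * cmod w ^ 2"
  proof -
    have "\<bar>Re (cnj z * w)\<bar> \<le> cmod z * cmod w"
      using abs_Re_le_cmod[of "cnj z * w"] by (simp add: norm_mult)
    then have "\<bar>Re (cnj z * w)\<bar>^2 \<le> (cmod z * cmod w)^2"
      by (intro power_mono) auto
    then show ?thesis by (simp add: power_mult_distrib)
  qed
  have ps: "(cmod z ^ 2) powr (s - 1) = (cmod z ^ 2) powr (s - 2) * cmod z ^ 2"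
    using powr_split[of "cmod z ^ 2" "s - 1"] by simp
  have sq: "\<And>x::real. (2 * x)^2 = 4 * x^2" by (simp add: power2_eq_square)
  have "\<bar>(cmod z ^ 2) powr (s - 2) * (2 * Re (cnj z * w))^2\<bar> = (cmod z ^ 2) powr (s - 2) * (4 * (Re (cnj z * w))^2)"
    unfolding sq by simp
  also have "\<dots> \<le> (cmod z ^ 2) powr (s - 2) * (4 * (cmod z ^ 2 * cmod w ^ 2))"
    by (intro mult_left_mono) (use r in auto)
  also have "\<dots> = 4 * cmod w ^ 2 * (cmod z ^ 2) powr (s - 1)"
    unfolding ps by (simp add: algebra_simps)
  finally show ?thesis .
qed

lemma cont_T:
  fixes f g :: "'a::t2_space \<Rightarrow> complex"
  assumes s: "s > 1" and f: "continuous_on S f" and g: "continuous_on S g"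
  shows "continuous_on S (\<lambda>x. (cmod (f x) ^ 2) powr (s - 2) * (2 * Re (cnj (f x) * g x))^2)"
proof (rule continuous_on_eq_continuous_within[THEN iffD2], rule ballI)
  fix x assume x: "x \<in> S"
  have fx: "continuous (at x within S) f" and gx: "continuous (at x within S) g"
    using f g x by (auto simp: continuous_on_eq_continuous_within)
  show "continuous (at x within S) (\<lambda>x. (cmod (f x) ^ 2) powr (s - 2) * (2 * Re (cnj (f x) * g x))^2)"
  proof (cases "f x = 0")
    case False
    then show ?thesis using fx gx by (intro continuous_intros) (auto intro!: continuous_intros)
  next
    case True
    have lim: "((\<lambda>y. 4 * cmod (g y) ^ 2 * (cmod (f y) ^ 2) powr (s - 1)) \<longlongrightarrow> 4 * cmod (g x) ^ 2 * (cmod (f x) ^ 2) powr (s - 1)) (at x within S)"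
      using fx gx s unfolding continuous_within by (intro tendsto_intros) auto
    have "((\<lambda>y. (cmod (f y) ^ 2) powr (s - 2) * (2 * Re (cnj (f y) * g y))^2) \<longlongrightarrow> 0) (at x within S)"
      apply (rule Lim_null_comparison[OF _ lim[unfolded True, simplified]])
      using T_bound[OF s] by (simp add: always_eventually)
    then show ?thesis using True by (simp add: continuous_within)
  qed
qed

lemma cont_P2:
  fixes f g :: "'a::t2_space \<Rightarrow> complex"
  assumes "s > 1" "continuous_on S f" "continuous_on S g"
  shows "continuous_on S (\<lambda>x. P2 s (f x) (g x))"
proof -
  have "continuous_on S (\<lambda>x. s * (s - 1) * ((cmod (f x) ^ 2) powr (s - 2) * (2 * Re (cnj (f x) * g x))^2)
     + s * (cmod (f x) ^ 2) powr (s - 1) * (2 * cmod (g x) ^ 2))"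
    using assms by (intro continuous_intros continuous_on_powr' cont_T) auto
  then show ?thesis unfolding P2_def by (simp add: mult_ac)
qed

lemma P2_bound:
  assumes s: "s > 1" and zS: "cmod z \<le> S"
  shows "P2 s z w \<le> 2 * s * (2 * s - 1) * (S ^ 2) powr (s - 1) * cmod w ^ 2"
proof -
  have "P2 s z w \<le> s * (s - 1) * (4 * cmod w ^ 2 * (cmod z ^ 2) powr (s - 1)) + s * (cmod z ^ 2) powr (s - 1) * (2 * cmod w ^ 2)"
    unfolding P2_def using T_bound[OF s, of z w] s
    by (intro add_mono mult_left_mono) (auto simp: mult.assoc)
  also have "\<dots> = 2 * s * (2 * s - 1) * (cmod z ^ 2) powr (s - 1) * cmod w ^ 2"
    by (simp add: algebra_simps)
  also have "\<dots> \<le> 2 * s * (2 * s - 1) * (S ^ 2) powr (s - 1) * cmod w ^ 2"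
    using s zS by (intro mult_right_mono mult_left_mono powr_mono2 power_mono) auto
  finally show ?thesis .
qed



lemma tavg_integral:
  fixes f :: "real^'n \<Rightarrow> real"
  assumes "continuous_on torus_box f"
  shows "tavg f = integral torus_box f / (2 * pi) ^ CARD('n)"
  unfolding tavg_def using tmeas_integral(2)[OF assms] by simp

lemma cont_slice:
  assumes "continuous_on (UNIV \<times> torus_box) (\<lambda>(t, \<theta>). \<psi> t \<theta>)"
  shows "continuous_on torus_box (\<psi> t)"
proof -
  have "continuous_on torus_box ((\<lambda>(t, \<theta>). \<psi> t \<theta>) \<circ> (\<lambda>\<theta>. (t, \<theta>)))"
    by (rule continuous_on_compose[OF _ continuous_on_subset[OF assms]]) (auto intro!: continuous_intros)
  then show ?thesis by (simp add: o_def)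
qed

lemma GL:
  fixes \<psi>0 \<psi>1 :: "real \<Rightarrow> real^'n \<Rightarrow> real"
  assumes d: "\<And>t \<theta>. \<theta> \<in> torus_box \<Longrightarrow> ((\<lambda>t. \<psi>0 t \<theta>) has_real_derivative \<psi>1 t \<theta>) (at t)"
  and c0: "\<And>t. continuous_on torus_box (\<psi>0 t)"
  and c1: "continuous_on (UNIV \<times> torus_box) (\<lambda>(t, \<theta>). \<psi>1 t \<theta>)"
  shows "((\<lambda>t. tavg (\<psi>0 t)) has_real_derivative tavg (\<psi>1 t0)) (at t0)"
proof -
  have "((\<lambda>t. integral (cbox 0 (\<chi> i. 2 * pi)) (\<psi>0 t)) has_real_derivative integral (cbox 0 (\<chi> i. 2 * pi)) (\<psi>1 t0)) (at t0 within UNIV)"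
    apply (rule leibniz_rule_field_derivative)
    using d apply (simp add: torus_box_def)
    using c0 apply (simp add: torus_box_def integrable_continuous)
    using c1 apply (simp add: torus_box_def)
     apply simp
    apply simp
    done
  then have "((\<lambda>t. integral torus_box (\<psi>0 t) / (2 * pi) ^ CARD('n)) has_real_derivative integral torus_box (\<psi>1 t0) / (2 * pi) ^ CARD('n)) (at t0)"
    unfolding torus_box_def by (intro DERIV_cdivide) simp
  then show ?thesis
    using tavg_integral[OF c0] tavg_integral[OF cont_slice[OF c1]] by simp
qed



definition trig :: "(int^'n) set \<Rightarrow> (int^'n \<Rightarrow> complex) \<Rightarrow> real^'n \<Rightarrow> complex" where
  "trig E c \<theta> = (\<Sum>k\<in>E. c k * echar k \<theta>)"

lemma finite_DeltaJ: "finite (DeltaJ J)"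
proof -
  have "DeltaJ J \<subseteq> (\<lambda>f. \<chi> i. f i) ` (PiE UNIV (\<lambda>i. Delta1 (J $ i)))"
  proof
    fix k assume "k \<in> DeltaJ J"
    then have "(\<lambda>i. k $ i) \<in> PiE UNIV (\<lambda>i. Delta1 (J $ i))" by (auto simp: DeltaJ_def)
    then show "k \<in> (\<lambda>f. \<chi> i. f i) ` (PiE UNIV (\<lambda>i. Delta1 (J $ i)))"
      by (intro image_eqI[of _ _ "\<lambda>i. k $ i"]) auto
  qed
  moreover have "finite (PiE UNIV (\<lambda>i. Delta1 (J $ i)))"
    by (intro finite_PiE) (auto simp: Delta1_def)
  ultimately show ?thesis by (meson finite_imageI finite_subset)
qed

lemma PJ_eq: "PJ J w = trig (DeltaJ J) (fcoeff w)"
  by (simp add: fun_eq_iff PJ_def trig_def)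

lemma cont_trig[continuous_intros]: "continuous_on S (trig E c)"
  unfolding trig_def by (intro continuous_intros)

lemma cmod_echar[simp]: "cmod (echar k \<theta>) = 1"
  unfolding echar_def by (simp add: norm_exp_i_times)

lemma exp_mult_cnj: "exp (\<i> * of_real a) * cnj (exp (\<i> * of_real b)) = exp (\<i> * of_real (a - b))"
  unfolding cis_conv_exp[symmetric] by (simp add: cis_mult cis_cnj)

lemma echar_mult_cnj: "echar k \<theta> * cnj (echar l \<theta>) = echar (k - l) \<theta>"
  unfolding echar_def exp_mult_cnj
  by (simp add: sum_subtractf left_diff_distrib)

lemma orth:
  "(LINT \<theta>|(tmeas::(real^'n) measure). echar k \<theta> * cnj (echar l \<theta>)) = (if k = l then of_real ((2*pi)^CARD('n)) else 0)"
proof -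
  have c: "continuous_on torus_box (\<lambda>\<theta>::real^'n. echar k \<theta> * cnj (echar l \<theta>))"
    unfolding echar_mult_cnj by (intro continuous_intros)
  show ?thesis unfolding tmeas_integral(2)[OF c] unfolding echar_mult_cnj
    using int_echar[of "k - l"] by simp
qed

lemma int_ee: "integrable (tmeas::(real^'n) measure) (\<lambda>\<theta>. echar k \<theta> * cnj (echar l \<theta>))"
  by (rule tmeas_integral(1)) (intro continuous_intros)

lemma parseval:
  assumes E: "finite E"
  shows "tavg (\<lambda>\<theta>::real^'n. cmod (trig E c \<theta>) ^ 2) = (\<Sum>k\<in>E. cmod (c k) ^ 2)"
proof -
  let ?V = "(2*pi)^CARD('n)"
  have "complex_of_real (LINT \<theta>|(tmeas::(real^'n) measure). cmod (trig E c \<theta>) ^ 2)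
      = (LINT \<theta>|(tmeas::(real^'n) measure). trig E c \<theta> * cnj (trig E c \<theta>))"
  proof -
    have eq: "\<And>\<theta>. trig E c \<theta> * cnj (trig E c \<theta>) = complex_of_real (cmod (trig E c \<theta>) ^ 2)"
      by (simp only: complex_norm_square)
    show ?thesis unfolding eq by (rule integral_complex_of_real[symmetric])
  qed
  also have "\<dots> = (LINT \<theta>|(tmeas::(real^'n) measure). (\<Sum>k\<in>E. \<Sum>l\<in>E. (c k * cnj (c l)) * (echar k \<theta> * cnj (echar l \<theta>))))"
    apply (simp add: trig_def sum_distrib_left sum_distrib_right mult_ac)
    apply (subst sum.swap)
    apply (simp add: mult_ac)
    done
  also have "\<dots> = (\<Sum>k\<in>E. \<Sum>l\<in>E. (c k * cnj (c l)) * (LINT \<theta>|(tmeas::(real^'n) measure). echar k \<theta> * cnj (echar l \<theta>)))"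
    by (simp add: integral_sum integrable_sum int_ee)
  also have "\<dots> = (\<Sum>k\<in>E. (c k * cnj (c k)) * of_real ?V)"
    by (simp add: orth if_distrib E cong: if_cong)
  also have "\<dots> = (\<Sum>k\<in>E. of_real (cmod (c k) ^ 2) * of_real ?V)"
    by (simp only: complex_norm_square)
  also have "\<dots> = of_real (?V * (\<Sum>k\<in>E. cmod (c k) ^ 2))"
    by (simp only: of_real_mult[symmetric] of_real_sum[symmetric] sum_distrib_left mult.commute)
  finally have "(LINT \<theta>|(tmeas::(real^'n) measure). cmod (trig E c \<theta>) ^ 2) = ?V * (\<Sum>k\<in>E. cmod (c k) ^ 2)"
    using of_real_eq_iff by blast
  then show ?thesis unfolding tavg_def by simp
qed

lemma trig_lin: "trig E c \<theta> + of_real t * trig E d \<theta> = trig E (\<lambda>k. c k + of_real t * d k) \<theta>"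
  by (simp add: trig_def sum.distrib sum_distrib_left algebra_simps)

lemma L2T_integrable:
  fixes u :: "real^'n \<Rightarrow> complex"
  assumes "L2T u"
  shows "integrable (tmeas::(real^'n) measure) u"
proof -
  interpret finite_measure "tmeas::(real^'n) measure"
    unfolding tmeas_def torus_box_def by (intro finite_measure_lebesgue_on) auto
  have "integrable tmeas (\<lambda>x. 1 + (cmod (u x))^2)"
    using assms unfolding L2T_def by auto
  then show ?thesis
    apply (rule Bochner_Integration.integrable_bound)
    using assms unfolding L2T_def apply simp
    apply (rule AE_I2)
  proof -
    fix x
    have "0 \<le> (cmod (u x) - 1)^2" by simp
    then have "2 * cmod (u x) \<le> 1 + (cmod (u x))^2" by (simp add: power2_eq_square algebra_simps)
    moreover have "0 \<le> cmod (u x)" by simp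
    moreover have "norm (1 + (cmod (u x))^2) = 1 + (cmod (u x))^2" by simp
    ultimately show "norm (u x) \<le> norm (1 + (cmod (u x))^2)" by linarith
  qed
qed

lemma integrable_mult_cont:
  fixes u f :: "real^'n \<Rightarrow> complex"
  assumes "integrable (tmeas::(real^'n) measure) u" "continuous_on torus_box f"
  shows "integrable (tmeas::(real^'n) measure) (\<lambda>\<theta>. u \<theta> * f \<theta>)"
proof -
  have cpt: "compact (torus_box::(real^'n) set)" unfolding torus_box_def by simp
  obtain B where B: "\<And>x. x \<in> torus_box \<Longrightarrow> norm (f x) \<le> B"
    using compact_imp_bounded[OF compact_continuous_image[OF assms(2) cpt]]
    unfolding bounded_iff by auto
  have mf: "f \<in> borel_measurable (tmeas::(real^'n) measure)"
    unfolding tmeas_def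
    by (rule continuous_imp_measurable_on_sets_lebesgue[OF assms(2)]) (auto simp: torus_box_def)
  have sp: "space (tmeas::(real^'n) measure) = torus_box"
    unfolding tmeas_def by (simp add: space_restrict_space)
  have bnd: "\<And>x. x \<in> space (tmeas::(real^'n) measure) \<Longrightarrow> norm (u x * f x) \<le> norm (B * cmod (u x))"
  proof -
    fix x :: "real^'n" assume "x \<in> space (tmeas::(real^'n) measure)"
    then have "x \<in> torus_box" using sp by simp
    then have "cmod (f x) * cmod (u x) \<le> B * cmod (u x)"
      by (intro mult_right_mono B) auto
    then show "norm (u x * f x) \<le> norm (B * cmod (u x))" by (simp add: norm_mult mult_ac)
  qed
  show ?thesis
    apply (rule Bochner_Integration.integrable_bound[where f="\<lambda>\<theta>. B * cmod (u \<theta>)"])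
    using assms(1) apply simp
    using assms(1) mf apply measurable
    apply (rule AE_I2)
    by (rule bnd)
qed

lemma fcoeff_lin:
  assumes "L2T u" "L2T v"
  shows "fcoeff (\<lambda>\<theta>::real^'n. u \<theta> + of_real t * v \<theta>) k = fcoeff u k + of_real t * fcoeff v k"
proof -
  have iu: "integrable (tmeas::(real^'n) measure) (\<lambda>\<theta>. u \<theta> * cnj (echar k \<theta>))"
    by (rule integrable_mult_cont[OF L2T_integrable[OF assms(1)]]) (intro continuous_intros)
  have iv: "integrable (tmeas::(real^'n) measure) (\<lambda>\<theta>. v \<theta> * cnj (echar k \<theta>))"
    by (rule integrable_mult_cont[OF L2T_integrable[OF assms(2)]]) (intro continuous_intros)
  show ?thesis
    unfolding fcoeff_def tavgc_def
    using iu iv by (simp add: distrib_right mult.assoc add_divide_distrib)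
qed



lemma echar_shift:
  "echar k (\<theta> + t *\<^sub>R axis j 1) = exp (\<i> * (of_real (\<Sum>i\<in>UNIV. of_int (k $ i) * \<theta> $ i) + of_real t * of_int (k $ j)))"
proof -
  have "(\<Sum>i\<in>UNIV. of_int (k $ i) * (\<theta> + t *\<^sub>R axis j 1) $ i) = (\<Sum>i\<in>UNIV. of_int (k $ i) * \<theta> $ i + (if i = j then t * of_int (k $ j) else 0))"
    by (intro sum.cong) (auto simp: axis_def algebra_simps)
  also have "\<dots> = (\<Sum>i\<in>UNIV. of_int (k $ i) * \<theta> $ i) + t * of_int (k $ j)"
    by (simp add: sum.distrib)
  finally have "(\<Sum>i\<in>UNIV. of_int (k $ i) * (\<theta> + t *\<^sub>R axis j 1) $ i) = (\<Sum>i\<in>UNIV. of_int (k $ i) * \<theta> $ i) + t * of_int (k $ j)" .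
  then show ?thesis unfolding echar_def by (simp add: algebra_simps)
qed

lemma partialD_trig:
  assumes E: "finite E"
  shows "partialD (trig E c) j \<theta> = trig E (\<lambda>k. c k * (\<i> * of_int (k $ j))) \<theta>"
proof -
  let ?a = "\<lambda>k. of_real (\<Sum>i\<in>UNIV. of_int (k $ i) * \<theta> $ i) :: complex"
  have dk: "\<And>k. ((\<lambda>t. c k * exp (\<i> * (?a k + of_real t * of_int (k $ j)))) has_vector_derivative
      c k * (\<i> * of_int (k $ j)) * echar k \<theta>) (at 0)"
  proof -
    fix k
    have "((\<lambda>z. c k * exp (\<i> * (?a k + z * of_int (k $ j)))) has_field_derivative
        c k * (\<i> * of_int (k $ j)) * echar k \<theta>) (at (of_real 0))"
      by (rule derivative_eq_intros refl | simp)+ (simp add: echar_def mult_ac)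
    from has_vector_derivative_real_field[OF this]
    show "((\<lambda>t. c k * exp (\<i> * (?a k + of_real t * of_int (k $ j)))) has_vector_derivative
      c k * (\<i> * of_int (k $ j)) * echar k \<theta>) (at 0)" by simp
  qed
  have "((\<lambda>t. trig E c (\<theta> + t *\<^sub>R axis j 1)) has_vector_derivative trig E (\<lambda>k. c k * (\<i> * of_int (k $ j))) \<theta>) (at 0)"
    unfolding trig_def echar_shift
    by (rule has_vector_derivative_sum) (rule dk)
  then show ?thesis unfolding partialD_def by (rule vector_derivative_at)
qed

lemma gradnorm2_trig:
  assumes E: "finite E"
  shows "gradnorm2 (trig E c) \<theta> = (\<Sum>j\<in>UNIV. cmod (trig E (\<lambda>k. c k * (\<i> * of_int (k $ j))) \<theta>) ^ 2)"
  unfolding gradnorm2_def partialD_trig[OF E] ..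

lemma trig_bound:
  assumes E: "finite E"
  shows "cmod (trig E c \<theta>) \<le> sqrt (real (card E) * (\<Sum>k\<in>E. cmod (c k) ^ 2))"
proof (rule real_le_rsqrt)
  have "cmod (trig E c \<theta>) \<le> (\<Sum>k\<in>E. cmod (c k))"
    unfolding trig_def using norm_sum[of "\<lambda>k. c k * echar k \<theta>" E] by (simp add: norm_mult)
  then have "cmod (trig E c \<theta>) ^ 2 \<le> (\<Sum>k\<in>E. 1 * cmod (c k)) ^ 2"
    by (intro power_mono) auto
  also have "\<dots> \<le> (\<Sum>k\<in>E. 1 ^ 2) * (\<Sum>k\<in>E. cmod (c k) ^ 2)"
    by (rule Cauchy_Schwarz_ineq_sum)
  finally show "cmod (trig E c \<theta>) ^ 2 \<le> real (card E) * (\<Sum>k\<in>E. cmod (c k) ^ 2)" by simp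
qed

lemma integral_4:
  fixes f1 f2 f3 f4 :: "'a \<Rightarrow> complex"
  assumes "integrable M f1" "integrable M f2" "integrable M f3" "integrable M f4"
  shows "integral\<^sup>L M (\<lambda>x. f1 x - f2 x - f3 x + f4 x) = integral\<^sup>L M f1 - integral\<^sup>L M f2 - integral\<^sup>L M f3 + integral\<^sup>L M f4"
  using assms by (simp add: integrable_diff)

lemma bessel:
  fixes u :: "real^'n \<Rightarrow> complex"
  assumes u: "L2T u" and E: "finite E"
  shows "(\<Sum>k\<in>E. cmod (fcoeff u k) ^ 2) \<le> tavg (\<lambda>\<theta>. cmod (u \<theta>) ^ 2)"
proof -
  let ?V = "(2*pi)^CARD('n)"
  let ?T = "tmeas::(real^'n) measure"
  define c where "c = fcoeff u"
  define P where "P = trig E c"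
  define S where "S = (\<Sum>k\<in>E. cmod (c k) ^ 2)"
  have Vpos: "?V > 0" by simp
  have cP: "continuous_on torus_box P" unfolding P_def by (intro continuous_intros)
  have iu: "integrable ?T u" by (rule L2T_integrable[OF u])
  have iuu: "integrable ?T (\<lambda>\<theta>. cmod (u \<theta>) ^ 2)" using u unfolding L2T_def by simp
  have iuP: "integrable ?T (\<lambda>\<theta>. u \<theta> * cnj (P \<theta>))"
    by (rule integrable_mult_cont[OF iu]) (intro continuous_intros cP)
  have iuk: "\<And>k. integrable ?T (\<lambda>\<theta>. u \<theta> * cnj (echar k \<theta>))"
    by (rule integrable_mult_cont[OF iu]) (intro continuous_intros)
  have iPP: "integrable ?T (\<lambda>\<theta>. P \<theta> * cnj (P \<theta>))"
    by (rule tmeas_integral(1)) (intro continuous_intros cP)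
  have ck: "\<And>k. (LINT \<theta>|?T. u \<theta> * cnj (echar k \<theta>)) = of_real ?V * c k"
    unfolding c_def fcoeff_def tavgc_def by simp
  have A: "(LINT \<theta>|?T. u \<theta> * cnj (P \<theta>)) = of_real (?V * S)"
  proof -
    have "(LINT \<theta>|?T. u \<theta> * cnj (P \<theta>)) = (LINT \<theta>|?T. (\<Sum>k\<in>E. cnj (c k) * (u \<theta> * cnj (echar k \<theta>))))"
      unfolding P_def trig_def by (simp add: sum_distrib_left mult_ac)
    also have "\<dots> = (\<Sum>k\<in>E. cnj (c k) * (LINT \<theta>|?T. u \<theta> * cnj (echar k \<theta>)))"
      by (simp add: integral_sum integrable_sum iuk)
    also have "\<dots> = (\<Sum>k\<in>E. of_real (cmod (c k) ^ 2) * of_real ?V)"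
      unfolding ck complex_norm_square by (simp add: mult_ac)
    also have "\<dots> = of_real (?V * S)"
      unfolding S_def by (simp only: of_real_mult[symmetric] of_real_sum[symmetric] sum_distrib_left mult.commute)
    finally show ?thesis .
  qed
  have B: "(LINT \<theta>|?T. P \<theta> * cnj (P \<theta>)) = of_real (?V * S)"
  proof -
    have eq: "\<And>\<theta>. P \<theta> * cnj (P \<theta>) = complex_of_real (cmod (P \<theta>) ^ 2)"
      by (simp only: complex_norm_square)
    have "(LINT \<theta>|?T. P \<theta> * cnj (P \<theta>)) = of_real (LINT \<theta>|?T. cmod (P \<theta>) ^ 2)"
      unfolding eq by (rule integral_complex_of_real)
    also have "(LINT \<theta>|?T. cmod (P \<theta>) ^ 2) = ?V * S"
      using parseval[OF E, of c] Vpos unfolding tavg_def P_def S_def by (simp add: field_simps)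
    finally show ?thesis .
  qed
  have eq2: "\<And>\<theta>. complex_of_real (cmod (u \<theta> - P \<theta>) ^ 2) =
     complex_of_real (cmod (u \<theta>) ^ 2) - u \<theta> * cnj (P \<theta>) - cnj (u \<theta> * cnj (P \<theta>)) + P \<theta> * cnj (P \<theta>)"
    unfolding complex_norm_square by (simp add: algebra_simps)
  have "complex_of_real (LINT \<theta>|?T. cmod (u \<theta> - P \<theta>) ^ 2) = (LINT \<theta>|?T. complex_of_real (cmod (u \<theta> - P \<theta>) ^ 2))"
    by (rule integral_complex_of_real[symmetric])
  also have "\<dots> = (LINT \<theta>|?T. complex_of_real (cmod (u \<theta>) ^ 2)) - (LINT \<theta>|?T. u \<theta> * cnj (P \<theta>))
      - (LINT \<theta>|?T. cnj (u \<theta> * cnj (P \<theta>))) + (LINT \<theta>|?T. P \<theta> * cnj (P \<theta>))"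
  proof -
    have i1: "integrable ?T (\<lambda>\<theta>. complex_of_real (cmod (u \<theta>) ^ 2))" using integrable_of_real[OF iuu] by simp
    have i3: "integrable ?T (\<lambda>\<theta>. cnj (u \<theta> * cnj (P \<theta>)))" using integrable_cnj[OF iuP] .
    show ?thesis unfolding eq2
      by (rule integral_4[OF i1 iuP i3 iPP])
  qed
  also have "\<dots> = complex_of_real ((LINT \<theta>|?T. cmod (u \<theta>) ^ 2) - ?V * S)"
  proof -
    have C: "(LINT \<theta>|?T. cnj (u \<theta> * cnj (P \<theta>))) = of_real (?V * S)"
      using Bochner_Integration.integral_cnj[of ?T "\<lambda>\<theta>. u \<theta> * cnj (P \<theta>)"] A by (simp del: Bochner_Integration.integral_cnj)
    have D: "(LINT \<theta>|?T. complex_of_real (cmod (u \<theta>) ^ 2)) = of_real (LINT \<theta>|?T. cmod (u \<theta>) ^ 2)"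
      by (rule integral_complex_of_real)
    show ?thesis unfolding A B C D by simp
  qed
  finally have "(LINT \<theta>|?T. cmod (u \<theta> - P \<theta>) ^ 2) = (LINT \<theta>|?T. cmod (u \<theta>) ^ 2) - ?V * S"
    using of_real_eq_iff by blast
  moreover have "0 \<le> (LINT \<theta>|?T. cmod (u \<theta> - P \<theta>) ^ 2)" by simp
  ultimately have "?V * S \<le> (LINT \<theta>|?T. cmod (u \<theta>) ^ 2)" by linarith
  then have "S \<le> (LINT \<theta>|?T. cmod (u \<theta>) ^ 2) / ?V"
    using Vpos by (simp add: field_simps)
  then show ?thesis unfolding S_def c_def tavg_def .
qed



definition K1 :: "real \<Rightarrow> complex \<Rightarrow> complex \<Rightarrow> real" where
  "K1 p z w = (if p = 2 then 2 * Re (cnj z * w) else P1 (p / 2) z w)"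

definition K2 :: "real \<Rightarrow> complex \<Rightarrow> complex \<Rightarrow> real" where
  "K2 p z w = (if p = 2 then 2 * cmod w ^ 2 else P2 (p / 2) z w)"

lemma K0_eq:
  assumes "p \<ge> 2"
  shows "cmod z powr p = (if p = 2 then cmod z ^ 2 else (cmod z ^ 2) powr (p / 2))"
proof (cases "z = 0")
  case True then show ?thesis using assms by simp
next
  case False
  then have eq: "cmod z ^ 2 = cmod z powr 2" by (simp add: powr_realpow)
  have "(cmod z ^ 2) powr (p / 2) = cmod z powr p" unfolding eq by (simp only: powr_powr) simp
  then show ?thesis using False by simp
qed

lemma K_D1:
  assumes p: "p \<ge> 2"
  shows "((\<lambda>t. cmod (a + of_real t * b) powr p) has_real_derivative K1 p (a + of_real t * b) b) (at t)"
proof (cases "p = 2")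
  case True
  then show ?thesis unfolding K1_def using q_deriv[of a b t] by (simp add: K0_eq)
next
  case False
  then have s: "p / 2 > 1" using p by simp
  show ?thesis unfolding K1_def K0_eq[OF p] using D1[OF s, of a b t] False by simp
qed

lemma K_D2:
  assumes p: "p \<ge> 2"
  shows "((\<lambda>t. K1 p (a + of_real t * b) b) has_real_derivative K2 p (a + of_real t * b) b) (at t)"
proof (cases "p = 2")
  case True
  then show ?thesis unfolding K1_def K2_def using re_lin_deriv[of a b t] by simp
next
  case False
  then have s: "p / 2 > 1" using p by simp
  show ?thesis unfolding K1_def K2_def using D2[OF s, of a b t] False by simp
qed

lemma K_cont1:
  assumes p: "p \<ge> 2" and f: "continuous_on S f" and g: "continuous_on S g"
  shows "continuous_on S (\<lambda>x. K1 p (f x) (g x))"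
proof (cases "p = 2")
  case True
  then show ?thesis unfolding K1_def using f g by (simp; intro continuous_intros)
next
  case False
  then have s: "p / 2 > 1" using p by simp
  show ?thesis unfolding K1_def using cont_P1[OF s f g] False by simp
qed

lemma K_cont2:
  fixes f g :: "'a::t2_space \<Rightarrow> complex"
  assumes p: "p \<ge> 2" and f: "continuous_on S f" and g: "continuous_on S g"
  shows "continuous_on S (\<lambda>x. K2 p (f x) (g x))"
proof (cases "p = 2")
  case True
  then show ?thesis unfolding K2_def using f g by (simp; intro continuous_intros)
next
  case False
  then have s: "p / 2 > 1" using p by simp
  show ?thesis unfolding K2_def using cont_P2[OF s f g] False by simp
qed

lemma K_bound:
  assumes p: "p \<ge> 2" and zS: "cmod z \<le> S" and S: "0 < S"
  shows "K2 p z w \<le> p * (p - 1) * S powr (p - 2) * cmod w ^ 2"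
proof (cases "p = 2")
  case True
  then show ?thesis unfolding K2_def using S by simp
next
  case False
  then have s: "p / 2 > 1" using p by simp
  have "(S ^ 2) powr (p / 2 - 1) = S powr (p / 2 - 1) * S powr (p / 2 - 1)"
    using S by (simp add: power2_eq_square powr_mult)
  also have "\<dots> = S powr (p - 2)"
    by (simp add: powr_add[symmetric])
  finally have eq: "(S ^ 2) powr (p / 2 - 1) = S powr (p - 2)" .
  have "K2 p z w = P2 (p / 2) z w" unfolding K2_def using False by simp
  also have "\<dots> \<le> 2 * (p / 2) * (2 * (p / 2) - 1) * (S ^ 2) powr (p / 2 - 1) * cmod w ^ 2"
    by (rule P2_bound[OF s zS])
  also have "\<dots> = p * (p - 1) * S powr (p - 2) * cmod w ^ 2"
    unfolding eq by simp
  finally show ?thesis .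
qed

lemma space_tmeas: "space (tmeas::(real^'n) measure) = torus_box"
  unfolding tmeas_def by (simp add: space_restrict_space)

lemma tavg_sum:
  fixes f :: "'i \<Rightarrow> real^'n \<Rightarrow> real"
  assumes "finite I" "\<And>i. i \<in> I \<Longrightarrow> continuous_on torus_box (f i)"
  shows "tavg (\<lambda>\<theta>. \<Sum>i\<in>I. f i \<theta>) = (\<Sum>i\<in>I. tavg (f i))"
proof -
  have "\<And>i. i \<in> I \<Longrightarrow> integrable (tmeas::(real^'n) measure) (f i)"
    by (rule tmeas_integral(1)) (rule assms(2))
  then show ?thesis unfolding tavg_def
    by (simp add: Bochner_Integration.integral_sum sum_divide_distrib)
qed

lemma tavg_cmult: "tavg (\<lambda>\<theta>. c * f \<theta>) = c * tavg f"
  unfolding tavg_def by simp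

lemma tavg_mono:
  fixes f g :: "real^'n \<Rightarrow> real"
  assumes "continuous_on torus_box f" "continuous_on torus_box g" "\<And>\<theta>. \<theta> \<in> torus_box \<Longrightarrow> f \<theta> \<le> g \<theta>"
  shows "tavg f \<le> tavg g"
  unfolding tavg_def
  by (intro divide_right_mono integral_mono tmeas_integral(1) assms) (auto simp: space_tmeas assms)



lemma pow2_split: "1 \<le> j \<Longrightarrow> (2::int) ^ j = 2 * 2 ^ (j - 1)"
  by (metis Suc_diff_1 less_le_trans zero_less_one power_Suc)

lemma card_Delta1: "1 \<le> j \<Longrightarrow> card (Delta1 j) = 2 ^ (j - 1)"
proof -
  assume j: "1 \<le> j"
  have "card (Delta1 j) = nat (2 ^ j - 1 - 2 ^ (j - 1) + 1)"
    unfolding Delta1_def by simp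
  also have "\<dots> = 2 ^ (j - 1)" using pow2_split[OF j] by (simp add: nat_power_eq)
  finally show ?thesis .
qed

lemma Delta1_low: "k \<in> Delta1 j \<Longrightarrow> 2 ^ (j - 1) \<le> k"
  unfolding Delta1_def by simp

lemma DeltaJ_nonempty:
  assumes J: "\<forall>i. 1 \<le> J $ i"
  shows "(\<chi> i. 2 ^ (J $ i - 1)) \<in> DeltaJ J"
  unfolding DeltaJ_def Delta1_def using pow2_split J by auto

lemma card_DeltaJ_le:
  assumes J: "\<forall>i. 1 \<le> J $ i"
  shows "card (DeltaJ J) \<le> (\<Prod>i\<in>UNIV. 2 ^ (J $ i - 1))"
proof -
  have sub: "DeltaJ J \<subseteq> (\<lambda>f. \<chi> i. f i) ` (PiE UNIV (\<lambda>i. Delta1 (J $ i)))"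
  proof
    fix k assume "k \<in> DeltaJ J"
    then have "(\<lambda>i. k $ i) \<in> PiE UNIV (\<lambda>i. Delta1 (J $ i))" by (auto simp: DeltaJ_def)
    then show "k \<in> (\<lambda>f. \<chi> i. f i) ` (PiE UNIV (\<lambda>i. Delta1 (J $ i)))"
      by (intro image_eqI[of _ _ "\<lambda>i. k $ i"]) auto
  qed
  have fin: "finite (PiE UNIV (\<lambda>i. Delta1 (J $ i)))"
    by (intro finite_PiE) (auto simp: Delta1_def)
  have "card (DeltaJ J) \<le> card ((\<lambda>f. \<chi> i. f i) ` (PiE UNIV (\<lambda>i. Delta1 (J $ i))))"
    by (rule card_mono[OF finite_imageI[OF fin] sub])
  also have "\<dots> \<le> card (PiE UNIV (\<lambda>i. Delta1 (J $ i)))"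
    by (rule card_image_le[OF fin])
  also have "\<dots> = (\<Prod>i\<in>UNIV. card (Delta1 (J $ i)))"
    by (simp add: card_PiE)
  also have "\<dots> = (\<Prod>i\<in>UNIV. 2 ^ (J $ i - 1))"
    using J by (simp add: card_Delta1)
  finally show ?thesis .
qed

lemma sq_powr: "0 < (x::real) \<Longrightarrow> (x ^ 2) powr r = x powr (2 * r)"
  by (simp add: power2_eq_square powr_mult powr_add[symmetric])

lemma pow_powr_inv: "0 < (x::real) \<Longrightarrow> 0 < n \<Longrightarrow> (x ^ n) powr (1 / real n) = x"
  by (simp add: powr_realpow[symmetric] powr_powr)

lemma num_bound:
  fixes J :: "nat^'n"
  assumes p: "2 \<le> p" "p \<le> 2 + 4 / real CARD('n)" and N': "1 \<le> N'"
    and C1: "1 \<le> C" and C: "C \<le> (\<Prod>i\<in>UNIV. (2::real) ^ (J $ i - 1))"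
  shows "(sqrt (C * N')) powr (p - 2) \<le> (\<Sum>i\<in>UNIV. (4::real) ^ (J $ i - 1)) * N' ^ 2"
proof -
  define D where "D = real CARD('n)"
  define M where "M = (\<Sum>i\<in>UNIV. (4::real) ^ (J $ i - 1))"
  define Pi2 where "Pi2 = (\<Prod>i\<in>UNIV. (2::real) ^ (J $ i - 1))"
  have D1: "1 \<le> D" unfolding D_def by simp
  have CN1: "1 \<le> C * N'" using C1 N' by (metis mult_le_mono1 mult_1 order_trans less_eq_real_def mult_mono zero_le_one)
  have "(sqrt (C * N')) powr (p - 2) = (C * N') powr ((p - 2) / 2)"
    using CN1 by (simp add: sqrt_def root_powr_inverse powr_powr)
  also have "\<dots> \<le> (C * N') powr (2 / D)"
    apply (rule powr_mono) using p CN1 D1 unfolding D_def by (auto simp: field_simps)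
  also have "\<dots> = C powr (2 / D) * N' powr (2 / D)"
    using C1 N' by (simp add: powr_mult)
  also have "\<dots> \<le> M * N' ^ 2"
  proof (rule mult_mono)
    have "C powr (2 / D) \<le> Pi2 powr (2 / D)"
      using C C1 D1 unfolding Pi2_def by (intro powr_mono2) auto
    also have "\<dots> = (Pi2 ^ 2) powr (1 / D)"
      using sq_powr[of Pi2 "1 / D"] unfolding Pi2_def by (simp add: prod_pos)
    also have "\<dots> \<le> (M ^ CARD('n)) powr (1 / D)"
    proof (rule powr_mono2)
      have "Pi2 ^ 2 = (\<Prod>i\<in>UNIV. (4::real) ^ (J $ i - 1))"
      proof -
        have e: "\<And>k::nat. ((2::real) ^ k)^2 = 4 ^ k" by (induct_tac k) (simp_all add: power2_eq_square)
        show ?thesis unfolding Pi2_def prod_power_distrib e ..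
      qed
      also have "\<dots> \<le> (\<Prod>i\<in>(UNIV::'n set). M)"
        by (intro prod_mono) (auto simp: M_def intro!: member_le_sum)
      finally show "Pi2 ^ 2 \<le> M ^ CARD('n)" by simp
    qed (auto simp: Pi2_def D_def)
    also have "\<dots> = M"
    proof -
      have "0 < M" unfolding M_def by (intro sum_pos) auto
      then show ?thesis unfolding D_def by (rule pow_powr_inv) simp
    qed
    finally show "C powr (2 / D) \<le> M" .
    show "N' powr (2 / D) \<le> N' ^ 2"
    proof -
      have "N' powr (2 / D) \<le> N' powr (real 2)"
        using N' D1 by (intro powr_mono) (auto simp: field_simps)
      also have "\<dots> = N' ^ 2" using N' by (intro powr_realpow) simp
      finally show ?thesis .
    qed
  qed (auto simp: M_def sum_nonneg)
  finally show ?thesis unfolding M_def .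
qed



lemma cont_trig_comp[continuous_intros]:
  "continuous_on S f \<Longrightarrow> continuous_on S (\<lambda>x. trig E c (f x))"
  by (rule continuous_on_compose2[OF cont_trig[of UNIV]]) auto

lemma second_deriv:
  fixes u v :: "real^'n \<Rightarrow> complex" and J :: "nat^'n"
  assumes p: "p \<ge> 2" and u: "L2T u" and v: "L2T v"
  shows "deriv (deriv (\<lambda>t. Ham lam p J (\<lambda>\<theta>. u \<theta> + of_real t * v \<theta>))) 0
    = (1/2) * tavg (\<lambda>\<theta>. \<Sum>j\<in>UNIV. 2 * cmod (trig (DeltaJ J) (\<lambda>k. fcoeff v k * (\<i> * of_int (k $ j))) \<theta>) ^ 2)
      - lam / p * tavg (\<lambda>\<theta>. K2 p (trig (DeltaJ J) (fcoeff u) \<theta>) (trig (DeltaJ J) (fcoeff v) \<theta>))"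
proof -
  define E where "E = DeltaJ J"
  have E: "finite E" unfolding E_def by (rule finite_DeltaJ)
  define a where "a = trig E (fcoeff u)"
  define b where "b = trig E (fcoeff v)"
  define A where "A = (\<lambda>j. trig E (\<lambda>k. fcoeff u k * (\<i> * of_int (k $ j))))"
  define B where "B = (\<lambda>j. trig E (\<lambda>k. fcoeff v k * (\<i> * of_int (k $ j))))"
  define G0 where "G0 = (\<lambda>t \<theta>. \<Sum>j\<in>UNIV. cmod (A j \<theta> + of_real t * B j \<theta>) ^ 2)"
  define G1 where "G1 = (\<lambda>t \<theta>. \<Sum>j\<in>UNIV. 2 * Re (cnj (A j \<theta> + of_real t * B j \<theta>) * B j \<theta>))"
  define G2 where "G2 = (\<lambda>(t::real) \<theta>. \<Sum>j\<in>UNIV. 2 * cmod (B j \<theta>) ^ 2)"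
  define H0 where "H0 = (\<lambda>t \<theta>. cmod (a \<theta> + of_real t * b \<theta>) powr p)"
  define H1 where "H1 = (\<lambda>t \<theta>. K1 p (a \<theta> + of_real t * b \<theta>) (b \<theta>))"
  define H2 where "H2 = (\<lambda>t \<theta>. K2 p (a \<theta> + of_real t * b \<theta>) (b \<theta>))"
  have PJt: "\<And>t. PJ J (\<lambda>\<theta>. u \<theta> + of_real t * v \<theta>) = trig E (\<lambda>k. fcoeff u k + of_real t * fcoeff v k)"
  proof -
    fix t
    have "fcoeff (\<lambda>\<theta>. u \<theta> + of_real t * v \<theta>) = (\<lambda>k. fcoeff u k + of_real t * fcoeff v k)"
      using fcoeff_lin[OF u v] by (simp add: fun_eq_iff)
    then show "PJ J (\<lambda>\<theta>. u \<theta> + of_real t * v \<theta>) = trig E (\<lambda>k. fcoeff u k + of_real t * fcoeff v k)"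
      unfolding PJ_eq E_def by simp
  qed
  have Ham_eq: "(\<lambda>t. Ham lam p J (\<lambda>\<theta>. u \<theta> + of_real t * v \<theta>)) = (\<lambda>t. (1/2) * tavg (G0 t) - lam / p * tavg (H0 t))"
  proof
    fix t
    have g: "\<And>\<theta>. gradnorm2 (PJ J (\<lambda>\<theta>. u \<theta> + of_real t * v \<theta>)) \<theta> = G0 t \<theta>"
      unfolding PJt gradnorm2_trig[OF E] G0_def A_def B_def trig_lin
      by (simp add: algebra_simps)
    have h: "\<And>\<theta>. cmod (PJ J (\<lambda>\<theta>. u \<theta> + of_real t * v \<theta>) \<theta>) powr p = H0 t \<theta>"
      unfolding PJt H0_def a_def b_def trig_lin ..
    show "Ham lam p J (\<lambda>\<theta>. u \<theta> + of_real t * v \<theta>) = (1/2) * tavg (G0 t) - lam / p * tavg (H0 t)"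
      unfolding Ham_def g h by (simp add: fun_eq_iff[symmetric])
  qed
  have ca: "continuous_on S a" "continuous_on S b" "\<And>j. continuous_on S (A j)" "\<And>j. continuous_on S (B j)" for S
    unfolding a_def b_def A_def B_def by (intro continuous_intros)+
  have cs: "continuous_on (UNIV \<times> torus_box) (\<lambda>x. a (snd x) + of_real (fst x) * b (snd x))"
    "continuous_on (UNIV \<times> torus_box) (\<lambda>x. b (snd x))"
    "\<And>j. continuous_on (UNIV \<times> torus_box) (\<lambda>x. A j (snd x) + of_real (fst x) * B j (snd x))"
    "\<And>j. continuous_on (UNIV \<times> torus_box) (\<lambda>x. B j (snd x))"
    "\<And>j. continuous_on (UNIV \<times> torus_box) (\<lambda>x. A j (snd x))"
    unfolding a_def b_def A_def B_def by (intro continuous_intros)+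
  have dG0: "\<And>t \<theta>. ((\<lambda>t. G0 t \<theta>) has_real_derivative G1 t \<theta>) (at t)"
    unfolding G0_def G1_def by (rule DERIV_sum) (rule q_deriv)
  have dG1: "\<And>t \<theta>. ((\<lambda>t. G1 t \<theta>) has_real_derivative G2 t \<theta>) (at t)"
    unfolding G1_def G2_def by (rule DERIV_sum) (rule re_lin_deriv)
  have cG0: "\<And>t. continuous_on torus_box (G0 t)"
    unfolding G0_def using ca by (intro continuous_intros) auto
  have cG1: "continuous_on (UNIV \<times> torus_box) (\<lambda>(t, \<theta>). G1 t \<theta>)"
    unfolding G1_def case_prod_beta using cs by (intro continuous_intros) auto
  have cG2: "continuous_on (UNIV \<times> torus_box) (\<lambda>(t, \<theta>). G2 t \<theta>)"
    unfolding G2_def case_prod_beta using cs by (intro continuous_intros) auto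
  have TG0: "\<And>t. ((\<lambda>t. tavg (G0 t)) has_real_derivative tavg (G1 t)) (at t)"
    by (rule GL[OF dG0 cG0 cG1])
  have TG1: "\<And>t. ((\<lambda>t. tavg (G1 t)) has_real_derivative tavg (G2 t)) (at t)"
    by (rule GL[OF dG1 cont_slice[OF cG1] cG2])
  have dH0: "\<And>t \<theta>. ((\<lambda>t. H0 t \<theta>) has_real_derivative H1 t \<theta>) (at t)"
    unfolding H0_def H1_def by (rule K_D1[OF p])
  have dH1: "\<And>t \<theta>. ((\<lambda>t. H1 t \<theta>) has_real_derivative H2 t \<theta>) (at t)"
    unfolding H1_def H2_def by (rule K_D2[OF p])
  have cH0: "\<And>t. continuous_on torus_box (H0 t)"
    unfolding H0_def using ca p by (intro continuous_on_powr' continuous_intros) auto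
  have cH1: "continuous_on (UNIV \<times> torus_box) (\<lambda>(t, \<theta>). H1 t \<theta>)"
    unfolding H1_def case_prod_beta by (rule K_cont1[OF p cs(1) cs(2)])
  have cH2: "continuous_on (UNIV \<times> torus_box) (\<lambda>(t, \<theta>). H2 t \<theta>)"
    unfolding H2_def case_prod_beta by (rule K_cont2[OF p cs(1) cs(2)])
  have TH0: "\<And>t. ((\<lambda>t. tavg (H0 t)) has_real_derivative tavg (H1 t)) (at t)"
    by (rule GL[OF dH0 cH0 cH1])
  have TH1: "\<And>t. ((\<lambda>t. tavg (H1 t)) has_real_derivative tavg (H2 t)) (at t)"
    by (rule GL[OF dH1 cont_slice[OF cH1] cH2])
  have dF: "\<And>t. ((\<lambda>t. (1/2) * tavg (G0 t) - lam / p * tavg (H0 t)) has_real_derivative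
      (1/2) * tavg (G1 t) - lam / p * tavg (H1 t)) (at t)"
    by (intro DERIV_diff DERIV_cmult TG0 TH0)
  have dF': "deriv (\<lambda>t. (1/2) * tavg (G0 t) - lam / p * tavg (H0 t)) = (\<lambda>t. (1/2) * tavg (G1 t) - lam / p * tavg (H1 t))"
    using dF DERIV_imp_deriv by blast
  have d2: "((\<lambda>t. (1/2) * tavg (G1 t) - lam / p * tavg (H1 t)) has_real_derivative
      (1/2) * tavg (G2 0) - lam / p * tavg (H2 0)) (at 0)"
    by (intro DERIV_diff DERIV_cmult TG1 TH1)
  have "deriv (deriv (\<lambda>t. Ham lam p J (\<lambda>\<theta>. u \<theta> + of_real t * v \<theta>))) 0 = (1/2) * tavg (G2 0) - lam / p * tavg (H2 0)"
    unfolding Ham_eq dF' using d2 by (rule DERIV_imp_deriv)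
  then show ?thesis unfolding G2_def H2_def B_def a_def b_def E_def by simp
qed



lemma sq_int_bound:
  fixes k :: int and j :: nat
  assumes "2 ^ j \<le> k"
  shows "(4::real) ^ j \<le> (real_of_int k)^2"
proof -
  have "(2::real) ^ j \<le> real_of_int k" using assms
    by (metis of_int_le_iff of_int_numeral of_int_power)
  then have "((2::real) ^ j)^2 \<le> (real_of_int k)^2" by (intro power_mono) auto
  moreover have "((2::real) ^ j)^2 = 4 ^ j" by (induct j) (simp_all add: power2_eq_square)
  ultimately show ?thesis by simp
qed

theorem proposition2p2:
  fixes p N :: real
  assumes "2 \<le> p" and "p \<le> 2 + 4 / real CARD('n::finite)" and "N > 0"
  shows "\<exists>lam>0. \<forall>J::nat^'n. (\<forall>i. 1 \<le> J $ i) \<longrightarrow>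
    (\<exists>c>0. \<forall>u\<in>Omega N. \<forall>v. L2T v \<longrightarrow>
       deriv (deriv (\<lambda>t. Ham lam p J (\<lambda>\<theta>. u \<theta> + of_real t * v \<theta>))) 0
         \<ge> c * tavg (\<lambda>\<theta>. (cmod (PJ J v \<theta>))^2))"
proof -
  have p: "2 \<le> p" by (rule assms(1))
  define N' where "N' = max 1 N"
  have N'1: "1 \<le> N'" and NN': "N \<le> N'" unfolding N'_def by auto
  define lam where "lam = 1 / (2 * p * (p - 1) * N'^2)"
  have lam: "lam > 0" using p N'1 unfolding lam_def by simp
  show ?thesis
  proof (rule exI[of _ lam], intro conjI allI impI)
    show "lam > 0" by (rule lam)
    fix J :: "nat^'n" assume J: "\<forall>i. 1 \<le> J $ i"
    define E where "E = DeltaJ J"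
    have E: "finite E" unfolding E_def by (rule finite_DeltaJ)
    define M where "M = (\<Sum>i\<in>UNIV. (4::real) ^ (J $ i - 1))"
    have M0: "M > 0" unfolding M_def by (intro sum_pos) auto
    define C where "C = real (card E)"
    have "E \<noteq> {}" using DeltaJ_nonempty[OF J] unfolding E_def by auto
    then have C1: "1 \<le> C" unfolding C_def using E by (simp add: Suc_le_eq card_gt_0_iff)
    have Cle: "C \<le> (\<Prod>i\<in>UNIV. (2::real) ^ (J $ i - 1))"
    proof -
      have "C \<le> real (\<Prod>i\<in>UNIV. 2 ^ (J $ i - 1))"
        unfolding C_def E_def using card_DeltaJ_le[OF J] of_nat_le_iff by blast
      then show ?thesis by simp
    qed
    define Sb where "Sb = sqrt (C * N')"
    have Sb0: "Sb > 0" unfolding Sb_def using C1 N'1 by simp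
    have num: "Sb powr (p - 2) \<le> M * N'^2"
      unfolding Sb_def M_def by (rule num_bound[OF assms(1,2) N'1 C1 Cle])
    show "\<exists>c>0. \<forall>u\<in>Omega N. \<forall>v. L2T v \<longrightarrow>
       deriv (deriv (\<lambda>t. Ham lam p J (\<lambda>\<theta>. u \<theta> + of_real t * v \<theta>))) 0
         \<ge> c * tavg (\<lambda>\<theta>. (cmod (PJ J v \<theta>))^2)"
    proof (rule exI[of _ "M / 2"], intro conjI ballI allI impI)
      show "M / 2 > 0" using M0 by simp
      fix u v :: "real^'n \<Rightarrow> complex"
      assume u: "u \<in> Omega N" and v: "L2T v"
      have uL: "L2T u" and uN: "tavg (\<lambda>x. (cmod (u x))^2) \<le> N"
        using u unfolding Omega_def by auto
      define a where "a = trig E (fcoeff u)"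
      define b where "b = trig E (fcoeff v)"
      define B where "B = (\<lambda>j. trig E (\<lambda>k. fcoeff v k * (\<i> * of_int (k $ j))))"
      have PJv: "PJ J v = b" unfolding b_def E_def by (rule PJ_eq)
      define X where "X = tavg (\<lambda>\<theta>. (cmod (b \<theta>))^2)"
      have X: "X = (\<Sum>k\<in>E. cmod (fcoeff v k) ^ 2)"
        unfolding X_def b_def by (rule parseval[OF E])
      have X0: "X \<ge> 0" unfolding X by (intro sum_nonneg) auto
      have SD: "deriv (deriv (\<lambda>t. Ham lam p J (\<lambda>\<theta>. u \<theta> + of_real t * v \<theta>))) 0
        = (1/2) * tavg (\<lambda>\<theta>. \<Sum>j\<in>UNIV. 2 * cmod (B j \<theta>) ^ 2) - lam / p * tavg (\<lambda>\<theta>. K2 p (a \<theta>) (b \<theta>))"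
        unfolding B_def a_def b_def E_def by (rule second_deriv[OF p uL v])
      have G: "tavg (\<lambda>\<theta>. \<Sum>j\<in>UNIV. 2 * cmod (B j \<theta>) ^ 2) \<ge> 2 * M * X"
      proof -
        have "tavg (\<lambda>\<theta>. \<Sum>j\<in>UNIV. 2 * cmod (B j \<theta>) ^ 2) = (\<Sum>j\<in>UNIV. tavg (\<lambda>\<theta>. 2 * cmod (B j \<theta>) ^ 2))"
          by (rule tavg_sum) (auto simp: B_def intro!: continuous_intros)
        also have "\<dots> = (\<Sum>j\<in>UNIV. 2 * (\<Sum>k\<in>E. cmod (fcoeff v k * (\<i> * of_int (k $ j))) ^ 2))"
          unfolding tavg_cmult B_def parseval[OF E] ..
        also have "\<dots> = 2 * (\<Sum>k\<in>E. cmod (fcoeff v k) ^ 2 * (\<Sum>j\<in>UNIV. (real_of_int (k $ j))^2))"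
          by (simp add: norm_mult power_mult_distrib sum_distrib_left sum_distrib_right mult_ac sum.swap[of _ UNIV E])
        also have "\<dots> \<ge> 2 * (\<Sum>k\<in>E. cmod (fcoeff v k) ^ 2 * M)"
        proof -
          have "\<And>k. k \<in> E \<Longrightarrow> M \<le> (\<Sum>j\<in>UNIV. (real_of_int (k $ j))^2)"
            unfolding M_def
          proof (rule sum_mono)
            fix k j assume "k \<in> E"
            then have "k $ j \<in> Delta1 (J $ j)" unfolding E_def DeltaJ_def by auto
            then have "2 ^ (J $ j - 1) \<le> k $ j" by (rule Delta1_low)
            then show "(4::real) ^ (J $ j - 1) \<le> (real_of_int (k $ j))^2" by (rule sq_int_bound)
          qed
          then show ?thesis by (intro mult_left_mono sum_mono mult_left_mono) auto
        qed
        finally have "2 * (\<Sum>k\<in>E. cmod (fcoeff v k) ^ 2 * M) \<le> tavg (\<lambda>\<theta>. \<Sum>j\<in>UNIV. 2 * cmod (B j \<theta>) ^ 2)" .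
        moreover have "2 * (\<Sum>k\<in>E. cmod (fcoeff v k) ^ 2 * M) = 2 * M * X"
          unfolding X by (simp add: sum_distrib_right[symmetric])
        ultimately show ?thesis by simp
      qed
      have aS: "\<And>\<theta>. cmod (a \<theta>) \<le> Sb"
      proof -
        fix \<theta>
        have "(\<Sum>k\<in>E. cmod (fcoeff u k) ^ 2) \<le> N'"
          using bessel[OF uL E] uN NN' by linarith
        then have "C * (\<Sum>k\<in>E. cmod (fcoeff u k) ^ 2) \<le> C * N'"
          using C1 by (intro mult_left_mono) auto
        then have "sqrt (real (card E) * (\<Sum>k\<in>E. cmod (fcoeff u k) ^ 2)) \<le> Sb"
          unfolding Sb_def C_def by simp
        then show "cmod (a \<theta>) \<le> Sb" using trig_bound[OF E, of "fcoeff u" \<theta>] unfolding a_def by linarith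
      qed
      have H: "tavg (\<lambda>\<theta>. K2 p (a \<theta>) (b \<theta>)) \<le> p * (p - 1) * Sb powr (p - 2) * X"
      proof -
        have "tavg (\<lambda>\<theta>. K2 p (a \<theta>) (b \<theta>)) \<le> tavg (\<lambda>\<theta>. p * (p - 1) * Sb powr (p - 2) * cmod (b \<theta>) ^ 2)"
        proof (rule tavg_mono)
          show "continuous_on torus_box (\<lambda>\<theta>. K2 p (a \<theta>) (b \<theta>))"
            unfolding a_def b_def by (intro K_cont2[OF p] continuous_intros)
          show "continuous_on torus_box (\<lambda>\<theta>. p * (p - 1) * Sb powr (p - 2) * cmod (b \<theta>) ^ 2)"
            unfolding b_def by (intro continuous_intros)
          show "\<And>\<theta>. \<theta> \<in> torus_box \<Longrightarrow> K2 p (a \<theta>) (b \<theta>) \<le> p * (p - 1) * Sb powr (p - 2) * cmod (b \<theta>) ^ 2"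
            by (rule K_bound[OF p aS Sb0])
        qed
        also have "\<dots> = p * (p - 1) * Sb powr (p - 2) * X"
          unfolding X_def using tavg_cmult[of "p * (p - 1) * Sb powr (p - 2)" "\<lambda>\<theta>. cmod (b \<theta>) ^ 2"] by simp
        finally show ?thesis .
      qed
      have lamb: "lam * (p - 1) * Sb powr (p - 2) \<le> M / 2"
      proof -
        have "lam * (p - 1) * Sb powr (p - 2) \<le> lam * (p - 1) * (M * N'^2)"
          using lam p num by (intro mult_left_mono) auto
        also have "\<dots> = M / (2 * p)"
          unfolding lam_def using p N'1 by (simp add: field_simps)
        also have "\<dots> \<le> M / 2"
          using p M0 by (intro divide_left_mono) auto
        finally show ?thesis .
      qed
      have "lam / p * tavg (\<lambda>\<theta>. K2 p (a \<theta>) (b \<theta>)) \<le> lam / p * (p * (p - 1) * Sb powr (p - 2) * X)"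
        using H lam p by (intro mult_left_mono) auto
      also have "\<dots> = (lam * (p - 1) * Sb powr (p - 2)) * X"
        using p by (simp add: field_simps)
      also have "\<dots> \<le> (M / 2) * X"
        using lamb X0 by (intro mult_right_mono) auto
      finally have HH: "lam / p * tavg (\<lambda>\<theta>. K2 p (a \<theta>) (b \<theta>)) \<le> (M / 2) * X" .
      have "M / 2 * tavg (\<lambda>\<theta>. (cmod (PJ J v \<theta>))^2) = M / 2 * X"
        unfolding PJv X_def ..
      also have "\<dots> \<le> (1/2) * tavg (\<lambda>\<theta>. \<Sum>j\<in>UNIV. 2 * cmod (B j \<theta>) ^ 2) - lam / p * tavg (\<lambda>\<theta>. K2 p (a \<theta>) (b \<theta>))"
        using G HH by linarith
      finally show "deriv (deriv (\<lambda>t. Ham lam p J (\<lambda>\<theta>. u \<theta> + of_real t * v \<theta>))) 0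
         \<ge> M / 2 * tavg (\<lambda>\<theta>. (cmod (PJ J v \<theta>))^2)"
        unfolding SD .
    qed
  qed
qed

end
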